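(* Let $L\in\{1,2,\dots,q-1\}$. Every $L$-MDS code over $F=\mathrm{GF}(q)$ is MDS.
   Context: $\mathsf w(\cdot)$ denotes Hamming weight. For $L\in\mathbb Z^+$ and nonnegative $\tau\in\frac{1}{L+1}\mathbb Z$, a code $\mathcal C\subseteq F^n$ is strongly-$(\tau,L)$-list decodable if there do not exist $y\in F^n$ and $L+1$ distinct codewords $c_0,\dots,c_L\in\mathcal C$ with $\sum_{m=0}^{L}\mathsf w(y-c_m)\le(L+1)\tau$. A linear $[n,k]$ code over $F$ is called $L$-MDS if it is strongly-$\left(\frac{L(n-k)}{L+1},L\right)$-list decodable; equivalently, any $L+1$ distinct vectors lying in a common coset of the code have total Hamming weight greater than $L(n-k)$. *)

theory Defs
  imports "HOL-Analysis.Analysis"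
begin

text \<open>Vectors of F^n are modelled as elements of type 'a ^ 'n, with n = CARD('n).
  A linear [n,k] code is a subspace C (w.r.t. scalar multiplication *s) with vec.dim C = k.\<close>

definition hw :: "'a::zero ^ 'n \<Rightarrow> nat" where
  "hw x = card {i. x $ i \<noteq> 0}"

definition linear_code :: "('a::field ^ 'n) set \<Rightarrow> nat \<Rightarrow> bool" where
  "linear_code C k \<longleftrightarrow> vec.subspace C \<and> vec.dim C = k"

definition strongly_list_decodable ::
    "('a::ab_group_add ^ 'n) set \<Rightarrow> real \<Rightarrow> nat \<Rightarrow> bool" where
  "strongly_list_decodable C \<tau> L \<longleftrightarrow>
     \<not> (\<exists>y c. inj_on c {0..L} \<and> c ` {0..L} \<subseteq> C \<and>
            real (\<Sum>m\<in>{0..L}. hw (y - c m)) \<le> (real L + 1) * \<tau>)"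

definition L_MDS :: "('a::field ^ 'n) set \<Rightarrow> nat \<Rightarrow> nat \<Rightarrow> bool" where
  "L_MDS C k L \<longleftrightarrow> linear_code C k \<and>
     strongly_list_decodable C (real L * (real CARD('n) - real k) / (real L + 1)) L"

text \<open>MDS: minimum distance n - k + 1, i.e. every nonzero codeword has weight at least n - k + 1
  (the reverse inequality is the Singleton bound).\<close>
definition MDS :: "('a::field ^ 'n) set \<Rightarrow> nat \<Rightarrow> bool" where
  "MDS C k \<longleftrightarrow> linear_code C k \<and>
     (\<forall>c\<in>C. c \<noteq> 0 \<longrightarrow> CARD('n) - k + 1 \<le> hw c)"

end

theory Submission
  imports Defs
begin

theorem mainTheorem8:
  fixes C :: "('a::{field,finite} ^ 'n) set" and k L :: nat
  assumes "1 \<le> L" and "L \<le> CARD('a) - 1"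
    and "L_MDS C k L"
  shows "MDS C k"
proof -
  have lc: "linear_code C k" and sub: "vec.subspace C"
    and sld: "strongly_list_decodable C (real L * (real CARD('n) - real k) / (real L + 1)) L"
    using assms(3) unfolding L_MDS_def linear_code_def by auto
  have "card ({0..<L}::nat set) \<le> card (UNIV - {0::'a})"
    using assms(2) by (simp add: card_Diff_subset)
  then obtain g where g: "g ` {0..<L} \<subseteq> UNIV - {0::'a}" "inj_on g {0..<L}"
    using card_le_inj[of "{0..<L}" "UNIV - {0::'a}"] by auto
  define f where "f m = (if m = 0 then 0 else g (m - 1))" for m
  have fnz: "f m \<noteq> 0" if "m \<in> {1..L}" for m
  proof -
    have "m - 1 \<in> {0..<L}" using that by auto
    then have "g (m - 1) \<noteq> 0" using g(1) by blast
    then show ?thesis using that unfolding f_def by auto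
  qed
  have finj: "inj_on f {0..L}"
  proof (rule inj_onI)
    fix x y assume xy: "x \<in> {0..L}" "y \<in> {0..L}" "f x = f y"
    show "x = y"
    proof (cases "x = 0 \<or> y = 0")
      case True
      have f0: "f 0 = 0" by (simp add: f_def)
      show ?thesis
      proof (rule ccontr)
        assume ne: "x \<noteq> y"
        show False
        proof (cases "x = 0")
          case True
          then have "y \<in> {1..L}" using ne xy by auto
          then show False using fnz xy(3) True f0 by metis
        next
          case False
          then have "x \<in> {1..L}" "y = 0" using \<open>x = 0 \<or> y = 0\<close> xy by auto
          then show False using fnz xy(3) f0 by metis
        qed
      qed
    next
      case False
      then have "g (x - 1) = g (y - 1)" using xy(3) by (simp add: f_def)
      then have "x - 1 = y - 1" using g(2) xy False by (auto dest: inj_onD)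
      then show ?thesis using False by linarith
    qed
  qed
  show ?thesis
    unfolding MDS_def
  proof (intro conjI lc ballI impI)
    fix c assume cC: "c \<in> C" and c0: "c \<noteq> 0"
    show "CARD('n) - k + 1 \<le> hw c"
    proof (rule ccontr)
      assume "\<not> ?thesis"
      hence le: "hw c \<le> CARD('n) - k" by simp
      have "{i. c $ i \<noteq> 0} \<noteq> {}" using c0 by (auto simp: vec_eq_iff)
      hence "hw c \<ge> 1" unfolding hw_def by (simp add: Suc_le_eq card_gt_0_iff)
      hence lek: "real (hw c) \<le> real CARD('n) - real k" using le by linarith
      define cw where "cw m = f m *s c" for m
      have hws: "hw (0 - cw m) = (if m = 0 then 0 else hw c)" if "m \<in> {0..L}" for m
      proof (cases "m = 0")
        case True then show ?thesis by (simp add: cw_def f_def hw_def)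
      next
        case False
        then have "f m \<noteq> 0" using fnz that by auto
        then have "{i. (0 - cw m) $ i \<noteq> 0} = {i. c $ i \<noteq> 0}"
          by (auto simp: cw_def)
        then show ?thesis using False by (simp add: hw_def)
      qed
      have "(\<Sum>m\<in>{0..L}. hw (0 - cw m)) = (\<Sum>m\<in>{0..L}. if m = 0 then 0 else hw c)"
        using hws by (rule sum.cong[OF refl])
      also have "\<dots> = L * hw c"
      proof -
        have "(\<Sum>m\<in>{0..L}. if m = 0 then 0 else hw c) = (\<Sum>m\<in>{1..L}. hw c)"
          by (rule sum.mono_neutral_cong_right) auto
        then show ?thesis by simp
      qed
      finally have S: "(\<Sum>m\<in>{0..L}. hw (0 - cw m)) = L * hw c" .
      have "real (L * hw c) \<le> (real L + 1) * (real L * (real CARD('n) - real k) / (real L + 1))"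
        using lek by (simp add: mult_left_mono)
      moreover have "inj_on cw {0..L}"
      proof (rule inj_onI)
        fix x y assume xy: "x \<in> {0..L}" "y \<in> {0..L}" "cw x = cw y"
        obtain i where "c $ i \<noteq> 0" using c0 by (auto simp: vec_eq_iff)
        then have "f x = f y" using xy(3) unfolding cw_def
          by (metis mult_right_cancel vector_smult_component)
        then show "x = y" using finj xy by (auto dest: inj_onD)
      qed
      moreover have "cw ` {0..L} \<subseteq> C" using sub cC by (auto simp: cw_def vec.subspace_scale)
      ultimately show False using sld S unfolding strongly_list_decodable_def
        by (metis of_nat_mult)
    qed
  qed
qed

end
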